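(* Let $\beta\subset\mathcal B$. If $\beta$ is not extremal successor closed, then the $\beta$-state is contradictory, i.e. $\mathrm{Ev}(f_\beta)=\emptyset$.
   Context: Let $Q$ be a quiver with finite vertex and arrow sets $Q_0,Q_1$, $M$ a finite-dimensional complex representation, and $\mathcal B=\bigcup_p\mathcal B_p$ an ordered basis ($\mathcal B_p$ a basis of $M_p$, with a total order on $\mathcal B$). For $v:p\to q$, $i\in\mathcal B_p$ write $M_v(i)=\sum_{j\in\mathcal B_q}\mu_{v,i,j}j$. The coefficient quiver $\Gamma$ has vertices $\mathcal B$ and arrows $(v,i,j)$ ($i\in\mathcal B_p$, $j\in\mathcal B_q$, $\mu_{v,i,j}\ne0$); $F:\Gamma\to Q$ is the natural map. An arrow $(v,s,t)$ of $\Gamma$ is extremal if for all arrows $(v,s',t')\in\Gamma_1$ different from $(v,s,t)$ either $s<s'$ or $t'<t$. A subset $\beta\subset\mathcal B$ is extremal successor closed if for every extremal arrow $(v,s,t)$, $s\in\beta$ implies $t\in\beta$. For $v:p\to q$, $s\in F^{-1}(p)$, $t\in F^{-1}(q)$ let $E(v,t,s)=\sum_{(v,s',t')\in\Gamma_1}\mu_{v,s',t'}w_{t,t'}w_{s',s}-\sum_{(v,s',t)\in\Gamma_1}\mu_{v,s',t}w_{s',s}$ in variables $w_{i,j}$. $\mathrm{Rel}^2=\{(i,j):F(i)=F(j),i\le j\}$; $\mathrm{Rel}^3$ is the set of such $(v,t,s)$ for which some $(v,s',t')\in\Gamma_1$ has $s\ge s'$, $t\le t'$; $E(v,t,s)$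 is regarded as a polynomial in $w_{i,j}$, $(i,j)\in\mathrm{Rel}^2$ (other variables set to $0$). The Schubert system $\Sigma$ is the graph on $\mathrm{Rel}^2\sqcup\mathrm{Rel}^3$ with an edge $\{(i,j),(v,t,s)\}$ iff $w_{i,j}$ occurs in $E(v,t,s)$, with links $\lambda=((v,t,s),S)$, $S\subset\mathrm{Rel}^2$, whenever the monomial $\prod_{(i,j)\in S}w_{i,j}$ occurs in $E(v,t,s)$ with nonzero coefficient $\mu_\lambda$. A partial evaluation is a partial function $\mathrm{ev}:\mathrm{Rel}^2\dashrightarrow\mathbb C$ such that for every $(v,t,s)\in\mathrm{Rel}^3$ and neighbour $(k,l)$: if all other neighbours of $(v,t,s)$ are in the domain, then $(k,l)$ is in the domain and $\sum_{\lambda=((v,t,s),S)}\mu_\lambda\prod_{(i,j)\in S}\mathrm{ev}(i,j)=0$. $f_\beta$ is the partial function with $f_\beta(i,j)=1$ if $i=j\in\beta$, $0$ if $i\in\beta$, $i\neq j$, $0$ if $j\notin\beta$, undefined otherwise; $\mathrm{Ev}(f_\beta)$ is the set of partial evaluations extending $f_\beta$. *)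

theory Defs
  imports Complex_Main "HOL-Library.Multiset"
begin

text \<open>Basis B (finite, totally ordered
  via the linorder on 'b), F : B -> Q0 the vertex of each basis vector, and
  mu v i j the coefficient of j in M_v(i).\<close>

definition coeff_arrows ::
  "'a set \<Rightarrow> ('a \<Rightarrow> 'q) \<Rightarrow> ('a \<Rightarrow> 'q) \<Rightarrow> 'b set \<Rightarrow> ('b \<Rightarrow> 'q)
   \<Rightarrow> ('a \<Rightarrow> 'b \<Rightarrow> 'b \<Rightarrow> complex) \<Rightarrow> ('a \<times> 'b \<times> 'b) set" where
  "coeff_arrows Q1 src tgt B F mu =
     {(v, i, j). v \<in> Q1 \<and> i \<in> B \<and> j \<in> B \<and> F i = src v \<and> F j = tgt v \<and> mu v i j \<noteq> 0}"

definition extremal ::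
  "'a set \<Rightarrow> ('a \<Rightarrow> 'q) \<Rightarrow> ('a \<Rightarrow> 'q) \<Rightarrow> ('b::linorder) set \<Rightarrow> ('b \<Rightarrow> 'q)
   \<Rightarrow> ('a \<Rightarrow> 'b \<Rightarrow> 'b \<Rightarrow> complex) \<Rightarrow> 'a \<Rightarrow> 'b \<Rightarrow> 'b \<Rightarrow> bool" where
  "extremal Q1 src tgt B F mu v s t \<longleftrightarrow>
     (v, s, t) \<in> coeff_arrows Q1 src tgt B F mu \<and>
     (\<forall>s' t'. (v, s', t') \<in> coeff_arrows Q1 src tgt B F mu \<and> (s', t') \<noteq> (s, t)
        \<longrightarrow> s < s' \<or> t' < t)"

definition ext_succ_closed ::
  "'a set \<Rightarrow> ('a \<Rightarrow> 'q) \<Rightarrow> ('a \<Rightarrow> 'q) \<Rightarrow> ('b::linorder) set \<Rightarrow> ('b \<Rightarrow> 'q)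
   \<Rightarrow> ('a \<Rightarrow> 'b \<Rightarrow> 'b \<Rightarrow> complex) \<Rightarrow> 'b set \<Rightarrow> bool" where
  "ext_succ_closed Q1 src tgt B F mu \<beta> \<longleftrightarrow>
     (\<forall>v s t. extremal Q1 src tgt B F mu v s t \<longrightarrow> s \<in> \<beta> \<longrightarrow> t \<in> \<beta>)"

definition Rel2 :: "('b::linorder) set \<Rightarrow> ('b \<Rightarrow> 'q) \<Rightarrow> ('b \<times> 'b) set" where
  "Rel2 B F = {(i, j). i \<in> B \<and> j \<in> B \<and> F i = F j \<and> i \<le> j}"

definition Rel3 ::
  "'a set \<Rightarrow> ('a \<Rightarrow> 'q) \<Rightarrow> ('a \<Rightarrow> 'q) \<Rightarrow> ('b::linorder) set \<Rightarrow> ('b \<Rightarrow> 'q)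
   \<Rightarrow> ('a \<Rightarrow> 'b \<Rightarrow> 'b \<Rightarrow> complex) \<Rightarrow> ('a \<times> 'b \<times> 'b) set" where
  "Rel3 Q1 src tgt B F mu =
     {(v, t, s). v \<in> Q1 \<and> s \<in> B \<and> t \<in> B \<and> F s = src v \<and> F t = tgt v \<and>
        (\<exists>s' t'. (v, s', t') \<in> coeff_arrows Q1 src tgt B F mu \<and> s' \<le> s \<and> t \<le> t')}"

text \<open>The polynomial E(v,t,s), in the variables w_(i,j) with (i,j) in Rel2 (all other
  variables set to 0), represented by its coefficient function on monomials; a monomial
  is a multiset of variables.\<close>

definition Ecoef ::
  "'a set \<Rightarrow> ('a \<Rightarrow> 'q) \<Rightarrow> ('a \<Rightarrow> 'q) \<Rightarrow> ('b::linorder) set \<Rightarrow> ('b \<Rightarrow> 'q)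
   \<Rightarrow> ('a \<Rightarrow> 'b \<Rightarrow> 'b \<Rightarrow> complex) \<Rightarrow> 'a \<Rightarrow> 'b \<Rightarrow> 'b \<Rightarrow> ('b \<times> 'b) multiset \<Rightarrow> complex" where
  "Ecoef Q1 src tgt B F mu v t s m =
     (\<Sum>(s', t') \<in> {(s', t'). (v, s', t') \<in> coeff_arrows Q1 src tgt B F mu \<and>
            (t, t') \<in> Rel2 B F \<and> (s', s) \<in> Rel2 B F \<and> m = {#(t, t'), (s', s)#}}.
        mu v s' t')
   - (\<Sum>s' \<in> {s'. (v, s', t) \<in> coeff_arrows Q1 src tgt B F mu \<and>
            (s', s) \<in> Rel2 B F \<and> m = {#(s', s)#}}.
        mu v s' t)"

definition links ::
  "'a set \<Rightarrow> ('a \<Rightarrow> 'q) \<Rightarrow> ('a \<Rightarrow> 'q) \<Rightarrow> ('b::linorder) set \<Rightarrow> ('b \<Rightarrow> 'q)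
   \<Rightarrow> ('a \<Rightarrow> 'b \<Rightarrow> 'b \<Rightarrow> complex) \<Rightarrow> 'a \<Rightarrow> 'b \<Rightarrow> 'b \<Rightarrow> ('b \<times> 'b) multiset set" where
  "links Q1 src tgt B F mu v t s = {m. Ecoef Q1 src tgt B F mu v t s m \<noteq> 0}"

definition neighbours ::
  "'a set \<Rightarrow> ('a \<Rightarrow> 'q) \<Rightarrow> ('a \<Rightarrow> 'q) \<Rightarrow> ('b::linorder) set \<Rightarrow> ('b \<Rightarrow> 'q)
   \<Rightarrow> ('a \<Rightarrow> 'b \<Rightarrow> 'b \<Rightarrow> complex) \<Rightarrow> 'a \<Rightarrow> 'b \<Rightarrow> 'b \<Rightarrow> ('b \<times> 'b) set" where
  "neighbours Q1 src tgt B F mu v t s =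
     {ij. \<exists>m \<in> links Q1 src tgt B F mu v t s. ij \<in># m}"

definition partial_evaluation ::
  "'a set \<Rightarrow> ('a \<Rightarrow> 'q) \<Rightarrow> ('a \<Rightarrow> 'q) \<Rightarrow> ('b::linorder) set \<Rightarrow> ('b \<Rightarrow> 'q)
   \<Rightarrow> ('a \<Rightarrow> 'b \<Rightarrow> 'b \<Rightarrow> complex) \<Rightarrow> ('b \<times> 'b \<Rightarrow> complex option) \<Rightarrow> bool" where
  "partial_evaluation Q1 src tgt B F mu ev \<longleftrightarrow>
     dom ev \<subseteq> Rel2 B F \<and>
     (\<forall>(v, t, s) \<in> Rel3 Q1 src tgt B F mu.
        \<forall>kl \<in> neighbours Q1 src tgt B F mu v t s.
          neighbours Q1 src tgt B F mu v t s - {kl} \<subseteq> dom ev \<longrightarrow>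
            kl \<in> dom ev \<and>
            (\<Sum>m \<in> links Q1 src tgt B F mu v t s.
               Ecoef Q1 src tgt B F mu v t s m * prod_mset (image_mset (\<lambda>ij. the (ev ij)) m)) = 0)"

definition f_state :: "('b::linorder) set \<Rightarrow> ('b \<Rightarrow> 'q) \<Rightarrow> 'b set \<Rightarrow> ('b \<times> 'b \<Rightarrow> complex option)" where
  "f_state B F \<beta> = (\<lambda>(i, j).
     if (i, j) \<notin> Rel2 B F then None
     else if i = j \<and> i \<in> \<beta> then Some 1
     else if i \<in> \<beta> \<and> i \<noteq> j then Some 0
     else if j \<notin> \<beta> then Some 0
     else None)"

definition Ev ::
  "'a set \<Rightarrow> ('a \<Rightarrow> 'q) \<Rightarrow> ('a \<Rightarrow> 'q) \<Rightarrow> ('b::linorder) set \<Rightarrow> ('b \<Rightarrow> 'q)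
   \<Rightarrow> ('a \<Rightarrow> 'b \<Rightarrow> 'b \<Rightarrow> complex) \<Rightarrow> ('b \<times> 'b \<Rightarrow> complex option)
   \<Rightarrow> ('b \<times> 'b \<Rightarrow> complex option) set" where
  "Ev Q1 src tgt B F mu f = {ev. partial_evaluation Q1 src tgt B F mu ev \<and> f \<subseteq>\<^sub>m ev}"

end

theory Submission
  imports Defs
begin

theorem lemma2p8:
  fixes Q0 :: "'q set" and Q1 :: "'a set" and src tgt :: "'a \<Rightarrow> 'q"
    and B :: "('b::linorder) set" and F :: "'b \<Rightarrow> 'q"
    and mu :: "'a \<Rightarrow> 'b \<Rightarrow> 'b \<Rightarrow> complex" and \<beta> :: "'b set"
  assumes "finite Q0" and "finite Q1"
    and "src ` Q1 \<subseteq> Q0" and "tgt ` Q1 \<subseteq> Q0"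
    and "finite B" and "F ` B \<subseteq> Q0"
    and "\<beta> \<subseteq> B"
    and "\<not> ext_succ_closed Q1 src tgt B F mu \<beta>"
  shows "Ev Q1 src tgt B F mu (f_state B F \<beta>) = {}"
proof (rule ccontr)
  let ?CA = "coeff_arrows Q1 src tgt B F mu"
  obtain v s t where ext: "extremal Q1 src tgt B F mu v s t" and sb: "s \<in> \<beta>" and tn: "t \<notin> \<beta>"
    using assms(8) unfolding ext_succ_closed_def by blast
  have arr: "(v, s, t) \<in> ?CA" and ex: "\<And>s' t'. (v, s', t') \<in> ?CA \<Longrightarrow> (s', t') \<noteq> (s, t) \<Longrightarrow> s < s' \<or> t' < t"
    using ext unfolding extremal_def by blast+
  from arr have vQ: "v \<in> Q1" and sB: "s \<in> B" and tB: "t \<in> B" and Fs: "F s = src v" and Ft: "F t = tgt v"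
    and mu0: "mu v s t \<noteq> 0"
    unfolding coeff_arrows_def by auto
  define m1 where "m1 = {#(t, t), (s, s)#}"
  define m2 where "m2 = {#(s, s)#}"
  have m12: "m1 \<noteq> m2" unfolding m1_def m2_def by simp
  have R2s: "(s, s) \<in> Rel2 B F" and R2t: "(t, t) \<in> Rel2 B F" using sB tB unfolding Rel2_def by auto
  have S1: "{(s', t'). (v, s', t') \<in> ?CA \<and> (t, t') \<in> Rel2 B F \<and> (s', s) \<in> Rel2 B F \<and> m = {#(t, t'), (s', s)#}}
        = (if m = m1 then {(s, t)} else {})" for m
  proof -
    have "(s', t') = (s, t)" if "(v, s', t') \<in> ?CA" "(t, t') \<in> Rel2 B F" "(s', s) \<in> Rel2 B F" for s' t'
      using ex[OF that(1)] that(2,3) unfolding Rel2_def by force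
    then show ?thesis unfolding m1_def using arr R2s R2t by auto
  qed
  have S2: "{s'. (v, s', t) \<in> ?CA \<and> (s', s) \<in> Rel2 B F \<and> m = {#(s', s)#}}
        = (if m = m2 then {s} else {})" for m
  proof -
    have "s' = s" if "(v, s', t) \<in> ?CA" "(s', s) \<in> Rel2 B F" for s'
      using ex[OF that(1)] that(2) unfolding Rel2_def by force
    then show ?thesis unfolding m2_def using arr R2s by auto
  qed
  have EC: "Ecoef Q1 src tgt B F mu v t s m = (if m = m1 then mu v s t else 0) - (if m = m2 then mu v s t else 0)" for m
    unfolding Ecoef_def S1 S2 by auto
  have L: "links Q1 src tgt B F mu v t s = {m1, m2}"
    unfolding links_def EC using m12 mu0 by auto
  have N: "neighbours Q1 src tgt B F mu v t s = {(t, t), (s, s)}"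
    unfolding neighbours_def L m1_def m2_def by auto
  have R3: "(v, t, s) \<in> Rel3 Q1 src tgt B F mu"
    unfolding Rel3_def using vQ sB tB Fs Ft arr by blast
  assume "Ev Q1 src tgt B F mu (f_state B F \<beta>) \<noteq> {}"
  then obtain ev where pe: "partial_evaluation Q1 src tgt B F mu ev" and le: "f_state B F \<beta> \<subseteq>\<^sub>m ev"
    unfolding Ev_def by blast
  have fs: "f_state B F \<beta> (s, s) = Some 1" using R2s sb unfolding f_state_def by auto
  have ft: "f_state B F \<beta> (t, t) = Some 0" using R2t tn unfolding f_state_def by auto
  have es: "ev (s, s) = Some 1" using le fs unfolding map_le_def by (metis domI)
  have et: "ev (t, t) = Some 0" using le ft unfolding map_le_def by (metis domI)
  have "(\<Sum>m \<in> links Q1 src tgt B F mu v t s.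
          Ecoef Q1 src tgt B F mu v t s m * prod_mset (image_mset (\<lambda>ij. the (ev ij)) m)) = 0"
    using pe R3 N et unfolding partial_evaluation_def by fastforce
  then have "(\<Sum>m \<in> {m1, m2}.
          Ecoef Q1 src tgt B F mu v t s m * prod_mset (image_mset (\<lambda>ij. the (ev ij)) m)) = 0"
    unfolding L .
  then have "- mu v s t = 0" using m12 es et unfolding EC by (simp add: m1_def m2_def)
  then show False using mu0 by simp
qed

end
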